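(* Let $l>0$ and let $b:[0,l]\to\mathbb{R}$ be a continuous bathymetry profile. For a function $f$ on $[0,l]$ write $\overline{f}=\frac{1}{l}\int_0^l f(y)\,dy$. Define $$S(y)=\int_0^y\big(\overline{b}-b(s)\big)\,ds,\qquad \sigma(y)=\overline{S}-S(y),\qquad \chi=\overline{S^2}-\overline{S}^2,$$ so that $\frac{d\sigma}{dy}=b(y)-\overline{b}$. Let $\tau(t,x)>0$ and $u(t,x)$ be smooth functions and for any $f(t,x)$ write $\dot f=f_t+uf_x$. Assume $1-\tau\frac{d\sigma}{dy}(y)>0$ for all $y$ and $(t,x)$, and define $$M(t,x,y)=\int_0^y\left(\frac{\sigma(s)\,\ddot\tau}{1-\tau\frac{d\sigma}{ds}(s)}+\frac{\sigma(s)\frac{d\sigma}{ds}(s)\,\dot\tau^2}{\big(1-\tau\frac{d\sigma}{ds}(s)\big)^2}\right)ds+\frac{\sigma(y)^2\,\dot\tau^2}{2\big(1-\tau\frac{d\sigma}{dy}(y)\big)^2}.$$ Suppose the channel is wide in the sense that $\tau\frac{d\sigma}{dy}=\mathcal{O}(\varepsilon^\gamma)$ for some $\gamma>0$. Then, with the Lagrangian $$\mathcal{L}(\tau,\dot\tau)=-\chi\frac{\dot\tau^2}{2},$$ one has $$\overline{M\,\frac{d\sigma}{dy}}=-\left(\frac{\partial\mathcal{L}}{\partial\tau}-\frac{D}{Dt}\left(\frac{\partial\mathcal{L}}{\partial\dot\tau}\right)\right)+\mathcal{O}(\varepsilon^\gamma),$$ where $\frac{D}{Dt}=\partial_t+u\partial_x$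 and $\overline{M\frac{d\sigma}{dy}}=\frac1l\int_0^l M\,\frac{d\sigma}{dy}\,dy$.
   Context: This arises from transverse averaging of the 2D shallow water equations in a prismatic channel of width $l$ with bathymetry $b(y)$; $\varepsilon>0$ is a small parameter (ratio of transverse to longitudinal length scales), $\tau=1/\overline{h}$ is the inverse of the section-averaged depth and $u$ the averaged longitudinal velocity. $\mathcal{O}(\varepsilon^\gamma)$ denotes terms bounded by a constant times $\varepsilon^\gamma$ as $\varepsilon\to0$. *)

theory Defs
  imports "HOL-Analysis.Analysis"
begin

definition avg :: "real \<Rightarrow> (real \<Rightarrow> real) \<Rightarrow> real" where
  "avg l f = integral {0..l} f / l"

definition Sfun :: "real \<Rightarrow> (real \<Rightarrow> real) \<Rightarrow> real \<Rightarrow> real" where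
  "Sfun l b y = integral {0..y} (\<lambda>s. avg l b - b s)"

definition sigma :: "real \<Rightarrow> (real \<Rightarrow> real) \<Rightarrow> real \<Rightarrow> real" where
  "sigma l b y = avg l (Sfun l b) - Sfun l b y"

text \<open>d sigma / dy, which equals b(y) minus the mean of b (as stated in the paper).\<close>
definition dsigma :: "real \<Rightarrow> (real \<Rightarrow> real) \<Rightarrow> real \<Rightarrow> real" where
  "dsigma l b y = b y - avg l b"

definition chi :: "real \<Rightarrow> (real \<Rightarrow> real) \<Rightarrow> real" where
  "chi l b = avg l (\<lambda>y. (Sfun l b y)^2) - (avg l (Sfun l b))^2"

definition matdot :: "(real \<Rightarrow> real \<Rightarrow> real) \<Rightarrow> (real \<Rightarrow> real \<Rightarrow> real) \<Rightarrow> real \<Rightarrow> real \<Rightarrow> real" where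
  "matdot u f t x = deriv (\<lambda>s. f s x) t + u t x * deriv (\<lambda>z. f t z) x"

definition Mfun :: "real \<Rightarrow> (real \<Rightarrow> real) \<Rightarrow> (real \<Rightarrow> real \<Rightarrow> real) \<Rightarrow> (real \<Rightarrow> real \<Rightarrow> real)
    \<Rightarrow> real \<Rightarrow> real \<Rightarrow> real \<Rightarrow> real" where
  "Mfun l b tau u t x y =
     integral {0..y} (\<lambda>s. sigma l b s * matdot u (matdot u tau) t x / (1 - tau t x * dsigma l b s)
        + sigma l b s * dsigma l b s * (matdot u tau t x)^2 / (1 - tau t x * dsigma l b s)^2)
     + (sigma l b y)^2 * (matdot u tau t x)^2 / (2 * (1 - tau t x * dsigma l b y)^2)"

definition Lag :: "real \<Rightarrow> (real \<Rightarrow> real) \<Rightarrow> real \<Rightarrow> real \<Rightarrow> real" where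
  "Lag l b p q = - chi l b * q^2 / 2"

definition EL :: "real \<Rightarrow> (real \<Rightarrow> real) \<Rightarrow> (real \<Rightarrow> real \<Rightarrow> real) \<Rightarrow> (real \<Rightarrow> real \<Rightarrow> real)
    \<Rightarrow> real \<Rightarrow> real \<Rightarrow> real" where
  "EL l b tau u t x =
     deriv (\<lambda>p. Lag l b p (matdot u tau t x)) (tau t x)
     - matdot u (\<lambda>t' x'. deriv (\<lambda>q. Lag l b (tau t' x') q) (matdot u tau t' x')) t x"

end

theory Submission
  imports Defs
begin

context
  fixes l :: real and b :: "real \<Rightarrow> real"
  assumes lpos: "l > 0" and bc: "continuous_on {0..l} b"
begin

lemma g_cont: "continuous_on {0..l} (dsigma l b)"
  unfolding dsigma_def by (intro continuous_intros bc)

lemma S_cont: "continuous_on {0..l} (Sfun l b)"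
proof -
  have "(\<lambda>s. avg l b - b s) integrable_on {0..l}"
    by (intro integrable_continuous_real continuous_intros bc)
  then show ?thesis unfolding Sfun_def[abs_def] by (rule indefinite_integral_continuous_1)
qed

lemma S_deriv: "y \<in> {0..l} \<Longrightarrow> (Sfun l b has_real_derivative (- dsigma l b y)) (at y within {0..l})"
proof -
  assume y: "y \<in> {0..l}"
  have c: "continuous_on {0..l} (\<lambda>s. avg l b - b s)" by (intro continuous_intros bc)
  have "(Sfun l b has_real_derivative (avg l b - b y)) (at y within {0..l})"
    unfolding Sfun_def[abs_def] by (rule integral_has_real_derivative[OF c y])
  then show ?thesis unfolding dsigma_def by simp
qed

lemma S0: "Sfun l b 0 = 0" unfolding Sfun_def by simp

lemma Sl: "Sfun l b l = 0"
proof -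
  have bi: "b integrable_on {0..l}" by (rule integrable_continuous_real[OF bc])
  have "Sfun l b l = integral {0..l} (\<lambda>s. avg l b) - integral {0..l} b"
    unfolding Sfun_def by (rule integral_diff) (auto intro: bi)
  also have "\<dots> = 0" using lpos by (simp add: avg_def)
  finally show ?thesis .
qed

lemma sig_cont: "continuous_on {0..l} (sigma l b)"
  unfolding sigma_def[abs_def] by (intro continuous_intros S_cont)

lemma sig_deriv: "y \<in> {0..l} \<Longrightarrow> (sigma l b has_real_derivative (dsigma l b y)) (at y within {0..l})"
  unfolding sigma_def[abs_def] by (auto intro!: derivative_eq_intros S_deriv)

lemma sig_l: "sigma l b l = sigma l b 0"
  unfolding sigma_def by (simp add: S0 Sl)

lemma intS: "integral {0..l} (Sfun l b) = l * avg l (Sfun l b)"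
  using lpos by (simp add: avg_def)

lemma F_l: "integral {0..l} (sigma l b) = 0"
proof -
  have si: "Sfun l b integrable_on {0..l}" by (rule integrable_continuous_real[OF S_cont])
  have "integral {0..l} (sigma l b) = integral {0..l} (\<lambda>y. avg l (Sfun l b)) - integral {0..l} (Sfun l b)"
    unfolding sigma_def[abs_def] by (rule integral_diff) (auto intro: si)
  also have "\<dots> = 0" using lpos by (simp add: intS)
  finally show ?thesis .
qed

lemma F_cont: "continuous_on {0..l} (\<lambda>y. integral {0..y} (sigma l b))"
  by (rule indefinite_integral_continuous_1[OF integrable_continuous_real[OF sig_cont]])

lemma F_deriv: "y \<in> {0..l} \<Longrightarrow> ((\<lambda>y. integral {0..y} (sigma l b)) has_real_derivative sigma l b y) (at y within {0..l})"
  by (rule integral_has_real_derivative[OF sig_cont])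

lemma sig2_int: "integral {0..l} (\<lambda>y. (sigma l b y)^2) = integral {0..l} (\<lambda>y. (Sfun l b y)^2) - l * (avg l (Sfun l b))^2"
proof -
  define c where "c = avg l (Sfun l b)"
  have si: "Sfun l b integrable_on {0..l}" by (rule integrable_continuous_real[OF S_cont])
  have s2i: "(\<lambda>y. (Sfun l b y)^2) integrable_on {0..l}"
    by (rule integrable_continuous_real) (intro continuous_intros S_cont)
  have "((\<lambda>y. c^2 - 2*c * Sfun l b y + (Sfun l b y)^2) has_integral
     (c^2 * l - 2*c*integral {0..l} (Sfun l b) + integral {0..l} (\<lambda>y. (Sfun l b y)^2))) {0..l}"
    apply (intro has_integral_add has_integral_diff has_integral_mult_right integrable_integral si s2i)
    using has_integral_const_real[of "c^2" 0 l] lpos by (simp add: mult.commute)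
  moreover have "(\<lambda>y. (sigma l b y)^2) = (\<lambda>y. c^2 - 2*c * Sfun l b y + (Sfun l b y)^2)"
    by (auto simp: sigma_def c_def power2_eq_square algebra_simps)
  ultimately show ?thesis using intS unfolding c_def[symmetric]
    by (auto dest!: integral_unique simp: power2_eq_square algebra_simps)
qed

lemma I1: "avg l (\<lambda>y. integral {0..y} (sigma l b) * dsigma l b y) = - chi l b"
proof -
  let ?F = "\<lambda>y. integral {0..y} (sigma l b)"
  have "((\<lambda>y. (sigma l b y)^2 + ?F y * dsigma l b y) has_integral (?F l * sigma l b l - ?F 0 * sigma l b 0)) {0..l}"
    apply (rule fundamental_theorem_of_calculus)
    using lpos apply simp
    apply (unfold has_real_derivative_iff_has_vector_derivative[symmetric])
    apply (rule derivative_eq_intros F_deriv sig_deriv | assumption | simp)+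
    apply (simp add: power2_eq_square algebra_simps)
    done
  then have h: "((\<lambda>y. (sigma l b y)^2 + ?F y * dsigma l b y) has_integral 0) {0..l}"
    using F_l by simp
  have i1: "(\<lambda>y. (sigma l b y)^2) integrable_on {0..l}"
    by (rule integrable_continuous_real) (intro continuous_intros sig_cont)
  have i2: "(\<lambda>y. ?F y * dsigma l b y) integrable_on {0..l}"
    by (rule integrable_continuous_real) (intro continuous_intros F_cont g_cont)
  have "integral {0..l} (\<lambda>y. (sigma l b y)^2) + integral {0..l} (\<lambda>y. ?F y * dsigma l b y) = 0"
    using integral_add[OF i1 i2] integral_unique[OF h] by simp
  then show ?thesis using lpos unfolding avg_def chi_def sig2_int
    by (simp add: field_simps)
qed

lemma sg_int: "y \<in> {0..l} \<Longrightarrow> integral {0..y} (\<lambda>s. sigma l b s * dsigma l b s) = ((sigma l b y)^2 - (sigma l b 0)^2) / 2"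
proof -
  assume y: "y \<in> {0..l}"
  have "((\<lambda>s. sigma l b s * dsigma l b s) has_integral ((sigma l b y)^2/2 - (sigma l b 0)^2/2)) {0..y}"
  proof (rule fundamental_theorem_of_calculus)
    show "0 \<le> y" using y by simp
  next
    fix s assume s: "s \<in> {0..y}"
    then have s': "s \<in> {0..l}" using y by auto
    have "(sigma l b has_real_derivative (dsigma l b s)) (at s within {0..y})"
      by (rule has_field_derivative_subset[OF sig_deriv[OF s']]) (use y in auto)
    then have "((\<lambda>s. (sigma l b s)^2/2) has_real_derivative (sigma l b s * dsigma l b s)) (at s within {0..y})"
      by (auto intro!: derivative_eq_intros)
    then show "((\<lambda>s. (sigma l b s)^2/2) has_vector_derivative (sigma l b s * dsigma l b s)) (at s within {0..y})"
      by (simp add: has_real_derivative_iff_has_vector_derivative)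
  qed
  then show ?thesis by (simp add: integral_unique)
qed

lemma I2: "avg l (\<lambda>y. (integral {0..y} (\<lambda>s. sigma l b s * dsigma l b s) + (sigma l b y)^2/2) * dsigma l b y) = 0"
proof -
  define c where "c = sigma l b 0"
  have eq: "integral {0..l} (\<lambda>y. (integral {0..y} (\<lambda>s. sigma l b s * dsigma l b s) + (sigma l b y)^2/2) * dsigma l b y)
      = integral {0..l} (\<lambda>y. ((sigma l b y)^2 - c^2/2) * dsigma l b y)"
    by (rule integral_cong) (subst sg_int, assumption, simp add: c_def field_simps)
  have "((\<lambda>y. ((sigma l b y)^2 - c^2/2) * dsigma l b y) has_integral
      (((sigma l b l)^3/3 - c^2/2 * sigma l b l) - ((sigma l b 0)^3/3 - c^2/2 * sigma l b 0))) {0..l}"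
  proof (rule fundamental_theorem_of_calculus)
    show "0 \<le> l" using lpos by simp
  next
    fix s assume s: "s \<in> {0..l}"
    have "((\<lambda>s. (sigma l b s)^3/3 - c^2/2 * sigma l b s) has_real_derivative (((sigma l b s)^2 - c^2/2) * dsigma l b s)) (at s within {0..l})"
      by (rule derivative_eq_intros sig_deriv[OF s] refl | simp)+ (simp add: algebra_simps power2_eq_square)
    then show "((\<lambda>s. (sigma l b s)^3/3 - c^2/2 * sigma l b s) has_vector_derivative (((sigma l b s)^2 - c^2/2) * dsigma l b s)) (at s within {0..l})"
      by (simp add: has_real_derivative_iff_has_vector_derivative)
  qed
  then have "integral {0..l} (\<lambda>y. ((sigma l b y)^2 - c^2/2) * dsigma l b y) = 0"
    using sig_l by (simp add: integral_unique)
  then show ?thesis unfolding avg_def eq by simp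
qed

end

lemma abs_prod_le: "\<bar>a::real\<bar> \<le> A \<Longrightarrow> \<bar>c\<bar> \<le> C \<Longrightarrow> \<bar>a*c\<bar> \<le> A*C"
  by (simp add: abs_mult mult_mono')

lemma inv_bounds:
  fixes r d :: real
  assumes "\<bar>r\<bar> \<le> d" "d \<le> 1/2"
  shows "\<bar>1/(1-r) - 1\<bar> \<le> 2*d" "\<bar>1/(1-r)^2 - 1\<bar> \<le> 10*d"
proof -
  have r1: "1 - r \<ge> 1/2" using assms by auto
  have d0: "d \<ge> 0" using assms by auto
  have "1/(1-r) - 1 = r/(1-r)" using r1 by (simp add: field_simps)
  also have "\<bar>\<dots>\<bar> = \<bar>r\<bar>/(1-r)" using r1 by simp
  also have "\<dots> \<le> d/(1/2)" using r1 assms d0 by (intro frac_le) auto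
  finally show "\<bar>1/(1-r) - 1\<bar> \<le> 2*d" by simp
  have q: "(1-r)^2 \<noteq> 0" using r1 by auto
  have "1/(1-r)^2 - 1 = (1 - (1-r)^2)/(1-r)^2" using q by (simp add: diff_divide_distrib)
  also have "\<dots> = r*(2-r)/(1-r)^2" by (simp add: power2_eq_square algebra_simps)
  also have "\<bar>\<dots>\<bar> = \<bar>r\<bar>*(2-r)/(1-r)^2" using r1 by (simp add: abs_mult)
  also have "\<dots> \<le> (d*(5/2))/(1/4)"
  proof (intro frac_le)
    show "0 \<le> d * (5/2)" using d0 by simp
    show "\<bar>r\<bar> * (2 - r) \<le> d * (5/2)" using assms by (intro mult_mono) auto
    show "0 < (1/4::real)" by simp
    have "(1/2) * (1/2) \<le> (1-r)*(1-r)" using r1 by (intro mult_mono) auto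
    then show "1/4 \<le> (1 - r)^2" by (simp add: power2_eq_square)
  qed
  finally show "\<bar>1/(1-r)^2 - 1\<bar> \<le> 10*d" by simp
qed

context
  fixes l :: real and b :: "real \<Rightarrow> real"
  assumes lpos: "l > 0" and bc: "continuous_on {0..l} b"
  fixes B :: real
  assumes bB: "\<forall>y\<in>{0..l}. \<bar>b y\<bar> \<le> B"
begin

lemma B0: "0 \<le> B" using bB lpos by (metis abs_ge_zero atLeastAtMost_iff order.trans less_eq_real_def)

lemma avgb_bound: "\<bar>avg l b\<bar> \<le> B"
proof -
  have "norm (integral {0..l} b) \<le> B * (l - 0)"
    using bB lpos by (intro integral_bound bc) auto
  then show ?thesis using lpos by (simp add: avg_def field_simps)
qed

lemma g_bound: "y \<in> {0..l} \<Longrightarrow> \<bar>dsigma l b y\<bar> \<le> 2*B"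
  using bB avgb_bound unfolding dsigma_def by fastforce

lemma S_bound: "y \<in> {0..l} \<Longrightarrow> \<bar>Sfun l b y\<bar> \<le> 2*B*l"
proof -
  assume y: "y \<in> {0..l}"
  have c: "continuous_on {0..y} (\<lambda>s. avg l b - b s)"
    by (rule continuous_on_subset[of "{0..l}"]) (use y in \<open>auto intro!: continuous_intros bc\<close>)
  have "norm (integral {0..y} (\<lambda>s. avg l b - b s)) \<le> (2*B) * (y - 0)"
    apply (rule integral_bound[OF _ c])
    using y apply simp
  proof -
    fix t assume "t \<in> {0..y}"
    then have "\<bar>b t\<bar> \<le> B" using bB y by auto
    then show "norm (avg l b - b t) \<le> 2*B"
      using abs_triangle_ineq4[of "avg l b" "b t"] avgb_bound by simp
  qed
  also have "\<dots> \<le> 2*B*l" using y B0 by (simp add: mult_left_mono)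
  finally show ?thesis unfolding Sfun_def by simp
qed

lemma avgS_bound: "\<bar>avg l (Sfun l b)\<bar> \<le> 2*B*l"
proof -
  have "norm (integral {0..l} (Sfun l b)) \<le> (2*B*l) * (l - 0)"
    using S_bound lpos by (intro integral_bound S_cont lpos bc) auto
  then show ?thesis using lpos by (simp add: avg_def field_simps)
qed

lemma sig_bound: "y \<in> {0..l} \<Longrightarrow> \<bar>sigma l b y\<bar> \<le> 4*B*l"
  using S_bound[of y] avgS_bound unfolding sigma_def by auto

end


context
  fixes l :: real and b :: "real \<Rightarrow> real"
  assumes lpos: "l > 0" and bc: "continuous_on {0..l} b"
  fixes B :: real
  assumes bB: "\<forall>y\<in>{0..l}. \<bar>b y\<bar> \<le> B"
begin

lemma approx:
  fixes T P V K d :: real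
  assumes PK: "\<bar>P\<bar> \<le> K" and VK: "\<bar>V\<bar> \<le> K"
    and rd: "\<forall>y\<in>{0..l}. \<bar>T * dsigma l b y\<bar> \<le> d" and d2: "d \<le> 1/2"
  shows "\<bar>avg l (\<lambda>y. (integral {0..y} (\<lambda>s. sigma l b s * P / (1 - T * dsigma l b s)
            + sigma l b s * dsigma l b s * V^2 / (1 - T * dsigma l b s)^2)
            + (sigma l b y)^2 * V^2 / (2 * (1 - T * dsigma l b y)^2)) * dsigma l b y)
         - (- (chi l b * P))\<bar>
     \<le> ((l * (8*B*l*K + 80*B*B*l*K^2) + 80*B^2*l^2*K^2) * (2*B)) * d"
proof -
  define h where "h = (\<lambda>s. sigma l b s * P / (1 - T * dsigma l b s)
            + sigma l b s * dsigma l b s * V^2 / (1 - T * dsigma l b s)^2)"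
  define h0 where "h0 = (\<lambda>s. P * sigma l b s + V^2 * (sigma l b s * dsigma l b s))"
  define F where "F = (\<lambda>y. integral {0..y} (sigma l b))"
  define J where "J = (\<lambda>y. integral {0..y} (\<lambda>s. sigma l b s * dsigma l b s) + (sigma l b y)^2/2)"
  define Mf where "Mf = (\<lambda>y. integral {0..y} h + (sigma l b y)^2 * V^2 / (2 * (1 - T * dsigma l b y)^2))"
  define R where "R = (\<lambda>y. Mf y - P * F y - V^2 * J y)"
  define E1 where "E1 = 8*B*l*K + 80*B*B*l*K^2"
  define E2 where "E2 = 80*B^2*l^2*K^2"
  have B0: "0 \<le> B" by (rule B0[OF lpos bc bB])
  have K0: "0 \<le> K" using PK by auto
  have d0: "0 \<le> d" using rd lpos by (metis abs_ge_zero atLeastAtMost_iff order.trans less_eq_real_def)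
  have Dpos: "1 - T * dsigma l b y > 0" if "y \<in> {0..l}" for y
    using rd that d2 by force
  have sigc: "continuous_on {0..l} (sigma l b)" by (rule sig_cont[OF lpos bc])
  have gc: "continuous_on {0..l} (dsigma l b)" by (rule g_cont[OF lpos bc])
  have hc: "continuous_on {0..l} h" unfolding h_def
    by (intro continuous_intros sigc gc) (use Dpos in force)+
  have h0c: "continuous_on {0..l} h0" unfolding h0_def
    by (intro continuous_intros sigc gc)
  have sgc: "continuous_on {0..l} (\<lambda>s. sigma l b s * dsigma l b s)"
    by (intro continuous_intros sigc gc)
  have intg: "f integrable_on {0..y}" if "continuous_on {0..l} f" "y \<in> {0..l}" for f :: "real \<Rightarrow> real" and y
    by (rule integrable_continuous_real, rule continuous_on_subset[OF that(1)]) (use that in auto)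
  have Fc: "continuous_on {0..l} F" unfolding F_def by (rule F_cont[OF lpos bc])
  have Jc: "continuous_on {0..l} J" unfolding J_def
    by (intro continuous_intros sigc gc indefinite_integral_continuous_1 integrable_continuous_real sgc) auto
  have Mc: "continuous_on {0..l} Mf" unfolding Mf_def
    by (intro continuous_intros sigc gc indefinite_integral_continuous_1 integrable_continuous_real hc)
       (use Dpos in force)
  have Rc: "continuous_on {0..l} R" unfolding R_def by (intro continuous_intros Mc Fc Jc)
  have hb: "\<bar>h s - h0 s\<bar> \<le> E1 * d" if s: "s \<in> {0..l}" for s
  proof -
    let ?r = "T * dsigma l b s"
    have rs: "\<bar>?r\<bar> \<le> d" using rd s by auto
    have ne: "1 - ?r \<noteq> 0" using Dpos[OF s] by simp
    have eq: "h s - h0 s = (sigma l b s * P) * (1/(1 - ?r) - 1)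
        + (sigma l b s * dsigma l b s * V^2) * (1/(1 - ?r)^2 - 1)"
      unfolding h_def h0_def by (simp add: divide_inverse algebra_simps)
    have sb: "\<bar>sigma l b s\<bar> \<le> 4*B*l" by (rule sig_bound[OF lpos bc bB s])
    have gb: "\<bar>dsigma l b s\<bar> \<le> 2*B" by (rule g_bound[OF lpos bc bB s])
    have "\<bar>V\<bar> \<le> \<bar>K\<bar>" using VK by simp
    then have "V^2 \<le> K^2" by (simp only: abs_le_square_iff)
    then have V2: "\<bar>V^2\<bar> \<le> K^2" by simp
    have a1: "\<bar>(sigma l b s * P) * (1/(1 - ?r) - 1)\<bar> \<le> (4*B*l*K) * (2*d)"
      by (intro abs_prod_le inv_bounds(1)[OF rs d2] sb PK)
    have a2: "\<bar>(sigma l b s * dsigma l b s * V^2) * (1/(1 - ?r)^2 - 1)\<bar> \<le> (4*B*l*(2*B)*K^2) * (10*d)"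
      by (intro abs_prod_le inv_bounds(2)[OF rs d2] sb gb V2)
    have "\<bar>h s - h0 s\<bar> \<le> (4*B*l*K) * (2*d) + (4*B*l*(2*B)*K^2) * (10*d)"
      unfolding eq using a1 a2 by linarith
    also have "\<dots> = E1 * d" unfolding E1_def by (simp add: algebra_simps)
    finally show ?thesis .
  qed
  have Rb: "\<bar>R y\<bar> \<le> (l * E1 + E2) * d" if y: "y \<in> {0..l}" for y
  proof -
    have ih: "h integrable_on {0..y}" by (rule intg[OF hc y])
    have isig: "sigma l b integrable_on {0..y}" by (rule intg[OF sigc y])
    have isg: "(\<lambda>s. sigma l b s * dsigma l b s) integrable_on {0..y}" by (rule intg[OF sgc y])
    have "integral {0..y} h0 = P * integral {0..y} (sigma l b) + V^2 * integral {0..y} (\<lambda>s. sigma l b s * dsigma l b s)"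
      unfolding h0_def using integral_add[OF integrable_on_mult_right[OF isig] integrable_on_mult_right[OF isg]] by simp
    moreover have "integral {0..y} (\<lambda>s. h s - h0 s) = integral {0..y} h - integral {0..y} h0"
      by (rule integral_diff[OF ih intg[OF h0c y]])
    ultimately have e1: "integral {0..y} h = P * integral {0..y} (sigma l b) + V^2 * integral {0..y} (\<lambda>s. sigma l b s * dsigma l b s) + integral {0..y} (\<lambda>s. h s - h0 s)"
      by linarith
    have e2: "(sigma l b y)^2 * V^2 / (2 * (1 - T * dsigma l b y)^2) = (sigma l b y)^2 * V^2 * (1/(1 - T * dsigma l b y)^2) / 2"
      by simp
    have alg: "ih = P*a + W*c + dd \<Longrightarrow> ih + s2*W*q/2 - P*a - W*(c + s2/2) = dd + (s2*W/2)*(q - 1)"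
      for ih a W c dd s2 q :: real by (simp add: field_simps)
    have Req: "R y = integral {0..y} (\<lambda>s. h s - h0 s)
        + ((sigma l b y)^2 * V^2 / 2) * (1/(1 - T * dsigma l b y)^2 - 1)"
      unfolding R_def Mf_def F_def J_def e2 by (rule alg[OF e1])
    have b1: "\<bar>integral {0..y} (\<lambda>s. h s - h0 s)\<bar> \<le> l * E1 * d"
    proof -
      have "norm (integral {0..y} (\<lambda>s. h s - h0 s)) \<le> (E1 * d) * (y - 0)"
        apply (rule integral_bound)
        using y apply simp
         apply (rule continuous_on_subset[of "{0..l}"], intro continuous_intros hc h0c) using y apply auto[1]
        using hb y by auto
      also have "\<dots> \<le> (E1 * d) * l" using y E1_def B0 K0 d0 by (intro mult_left_mono) auto
      finally show ?thesis by (simp add: algebra_simps)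
    qed
    have sb: "\<bar>sigma l b y\<bar> \<le> 4*B*l" by (rule sig_bound[OF lpos bc bB y])
    have s2: "\<bar>(sigma l b y)^2\<bar> \<le> (4*B*l)^2"
    proof -
      have "\<bar>sigma l b y\<bar> \<le> \<bar>4*B*l\<bar>" using sb by simp
      then have "(sigma l b y)^2 \<le> (4*B*l)^2" by (simp only: abs_le_square_iff)
      then show ?thesis by simp
    qed
    have "\<bar>V\<bar> \<le> \<bar>K\<bar>" using VK by simp
    then have "V^2 \<le> K^2" by (simp only: abs_le_square_iff)
    then have V2: "\<bar>V^2\<bar> \<le> K^2" by simp
    have "\<bar>((sigma l b y)^2 * V^2 / 2) * (1/(1 - T * dsigma l b y)^2 - 1)\<bar> \<le> ((4*B*l)^2 * K^2 / 2) * (10 * d)"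
    proof (rule abs_prod_le)
      show "\<bar>1/(1 - T * dsigma l b y)^2 - 1\<bar> \<le> 10 * d"
        by (rule inv_bounds(2)[OF _ d2]) (use rd y in auto)
      show "\<bar>(sigma l b y)^2 * V^2 / 2\<bar> \<le> (4*B*l)^2 * K^2 / 2"
        using abs_prod_le[OF s2 V2] by simp
    qed
    also have "\<dots> = E2 * d" unfolding E2_def by (simp add: power2_eq_square algebra_simps)
    finally have b2: "\<bar>((sigma l b y)^2 * V^2 / 2) * (1/(1 - T * dsigma l b y)^2 - 1)\<bar> \<le> E2 * d" .
    have "(l * E1 + E2) * d = l * E1 * d + E2 * d" by (simp add: algebra_simps)
    then show ?thesis unfolding Req
      using b1 b2 abs_triangle_ineq[of "integral {0..y} (\<lambda>s. h s - h0 s)" "((sigma l b y)^2 * V^2 / 2) * (1/(1 - T * dsigma l b y)^2 - 1)"]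
      by linarith
  qed
  have ic: "f integrable_on {0..l}" if "continuous_on {0..l} f" for f :: "real \<Rightarrow> real"
    by (rule integrable_continuous_real[OF that])
  have i1: "(\<lambda>y. F y * dsigma l b y) integrable_on {0..l}" by (intro ic continuous_intros Fc gc)
  have i2: "(\<lambda>y. J y * dsigma l b y) integrable_on {0..l}" by (intro ic continuous_intros Jc gc)
  have i3: "(\<lambda>y. R y * dsigma l b y) integrable_on {0..l}" by (intro ic continuous_intros Rc gc)
  have decomp: "integral {0..l} (\<lambda>y. Mf y * dsigma l b y) = P * integral {0..l} (\<lambda>y. F y * dsigma l b y)
      + V^2 * integral {0..l} (\<lambda>y. J y * dsigma l b y) + integral {0..l} (\<lambda>y. R y * dsigma l b y)"
  proof -
    have "(\<lambda>y. Mf y * dsigma l b y) = (\<lambda>y. (P * (F y * dsigma l b y) + V^2 * (J y * dsigma l b y)) + R y * dsigma l b y)"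
      unfolding R_def by (auto simp: algebra_simps)
    moreover have "integral {0..l} (\<lambda>y. (P * (F y * dsigma l b y) + V^2 * (J y * dsigma l b y)) + R y * dsigma l b y)
      = integral {0..l} (\<lambda>y. P * (F y * dsigma l b y) + V^2 * (J y * dsigma l b y)) + integral {0..l} (\<lambda>y. R y * dsigma l b y)"
      by (rule integral_add[OF integrable_add[OF integrable_on_mult_right[OF i1] integrable_on_mult_right[OF i2]] i3])
    moreover have "integral {0..l} (\<lambda>y. P * (F y * dsigma l b y) + V^2 * (J y * dsigma l b y))
      = integral {0..l} (\<lambda>y. P * (F y * dsigma l b y)) + integral {0..l} (\<lambda>y. V^2 * (J y * dsigma l b y))"
      by (rule integral_add[OF integrable_on_mult_right[OF i1] integrable_on_mult_right[OF i2]])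
    ultimately show ?thesis by simp
  qed
  have avF: "integral {0..l} (\<lambda>y. F y * dsigma l b y) = - l * chi l b"
    using I1[OF lpos bc] lpos unfolding F_def avg_def by (simp add: field_simps)
  have avJ: "integral {0..l} (\<lambda>y. J y * dsigma l b y) = 0"
    using I2[OF lpos bc] lpos unfolding J_def avg_def by simp
  have Rint: "\<bar>integral {0..l} (\<lambda>y. R y * dsigma l b y)\<bar> \<le> (((l * E1 + E2) * d) * (2*B)) * l"
  proof -
    have "norm (integral {0..l} (\<lambda>y. R y * dsigma l b y)) \<le> (((l * E1 + E2) * d) * (2*B)) * (l - 0)"
      apply (rule integral_bound)
      using lpos apply simp
       apply (intro continuous_intros Rc gc)
      using abs_prod_le[OF Rb g_bound[OF lpos bc bB]] by simp
    then show ?thesis by simp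
  qed
  have main: "avg l (\<lambda>y. Mf y * dsigma l b y) - (- (chi l b * P)) = integral {0..l} (\<lambda>y. R y * dsigma l b y) / l"
    unfolding avg_def decomp avF avJ using lpos by (simp add: field_simps)
  have "\<bar>avg l (\<lambda>y. Mf y * dsigma l b y) - (- (chi l b * P))\<bar> \<le> ((l * E1 + E2) * (2*B)) * d"
    unfolding main using Rint lpos by (simp add: field_simps)
  then show ?thesis unfolding Mf_def h_def E1_def E2_def .
qed

end

lemma deriv_cmult_real:
  fixes f :: "real \<Rightarrow> real"
  assumes "f differentiable at t"
  shows "deriv (\<lambda>s. c * f s) t = c * deriv f t"
proof -
  have "DERIV f t :> deriv f t" using assms by (simp add: DERIV_deriv_iff_real_differentiable)
  then have "DERIV (\<lambda>s. c * f s) t :> c * deriv f t" by (rule DERIV_cmult)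
  then show ?thesis by (rule DERIV_imp_deriv)
qed

lemma EL_eq:
  assumes "(\<lambda>s. matdot u tau s x) differentiable at t" "(\<lambda>z. matdot u tau t z) differentiable at x"
  shows "EL l b tau u t x = chi l b * matdot u (matdot u tau) t x"
proof -
  have d1: "deriv (\<lambda>p. Lag l b p q) p0 = 0" for q p0 unfolding Lag_def by simp
  have d2: "deriv (\<lambda>q. Lag l b p q) v = - chi l b * v" for p v unfolding Lag_def
    by (rule DERIV_imp_deriv) (auto intro!: derivative_eq_intros simp: power2_eq_square)
  have "(\<lambda>t' x'. deriv (\<lambda>q. Lag l b (tau t' x') q) (matdot u tau t' x')) = (\<lambda>t' x'. - chi l b * matdot u tau t' x')"
    by (simp add: d2)
  then have "EL l b tau u t x = - matdot u (\<lambda>t' x'. - chi l b * matdot u tau t' x') t x"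
    unfolding EL_def d1 by simp
  also have "\<dots> = chi l b * matdot u (matdot u tau) t x"
    unfolding matdot_def[of u "\<lambda>t' x'. - chi l b * matdot u tau t' x'"]
    using deriv_cmult_real[OF assms(1), of "- chi l b"] deriv_cmult_real[OF assms(2), of "- chi l b"]
    by (simp add: matdot_def[of u "matdot u tau"] algebra_simps)
  finally show ?thesis .
qed

lemma powr_small:
  fixes C \<gamma> :: real assumes "\<gamma> > 0"
  shows "\<forall>\<^sub>F \<epsilon> in at_right 0. C * \<epsilon> powr \<gamma> \<le> 1/2"
proof -
  have lim0: "((\<lambda>\<epsilon>::real. \<epsilon> powr \<gamma>) \<longlongrightarrow> 0 powr \<gamma>) (at_right 0)"
    by (rule tendsto_powr') (use assms in \<open>auto intro!: tendsto_intros simp: eventually_at_right_less eventually_at_filter\<close>)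
  then have "((\<lambda>\<epsilon>::real. C * \<epsilon> powr \<gamma>) \<longlongrightarrow> C * 0) (at_right 0)"
    using tendsto_mult[OF tendsto_const[of C] lim0] assms by simp
  then have "\<forall>\<^sub>F \<epsilon> in at_right 0. C * \<epsilon> powr \<gamma> < 1/2"
    by (rule order_tendstoD(2)) simp
  then show ?thesis by eventually_elim simp
qed


theorem proposition2:
  fixes l \<gamma> :: real
    and b :: "real \<Rightarrow> real \<Rightarrow> real"
    and tau u :: "real \<Rightarrow> real \<Rightarrow> real \<Rightarrow> real"
  assumes l_pos: "l > 0"
    and gamma_pos: "\<gamma> > 0"
    and b_cont: "\<forall>\<epsilon>>0. continuous_on {0..l} (b \<epsilon>)"
    and b_bounded: "\<exists>B. \<forall>\<^sub>F \<epsilon> in at_right 0. \<forall>y\<in>{0..l}. \<bar>b \<epsilon> y\<bar> \<le> B"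
    and tau_pos: "\<forall>\<epsilon>>0. \<forall>t x. tau \<epsilon> t x > 0"
    and smooth: "\<forall>\<epsilon>>0. \<forall>t x.
        (\<lambda>s. tau \<epsilon> s x) differentiable at t \<and> (\<lambda>z. tau \<epsilon> t z) differentiable at x \<and>
        (\<lambda>s. u \<epsilon> s x) differentiable at t \<and> (\<lambda>z. u \<epsilon> t z) differentiable at x \<and>
        (\<lambda>s. matdot (u \<epsilon>) (tau \<epsilon>) s x) differentiable at t \<and>
        (\<lambda>z. matdot (u \<epsilon>) (tau \<epsilon>) t z) differentiable at x"
    and nondeg: "\<forall>\<epsilon>>0. \<forall>t x. \<forall>y\<in>{0..l}. 1 - tau \<epsilon> t x * dsigma l (b \<epsilon>) y > 0"
    and wide: "\<exists>C. \<forall>\<^sub>F \<epsilon> in at_right 0. \<forall>t x. \<forall>y\<in>{0..l}.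
        \<bar>tau \<epsilon> t x * dsigma l (b \<epsilon>) y\<bar> \<le> C * \<epsilon> powr \<gamma>"
    and dots_bounded: "\<exists>B. \<forall>\<^sub>F \<epsilon> in at_right 0. \<forall>t x.
        \<bar>matdot (u \<epsilon>) (tau \<epsilon>) t x\<bar> \<le> B \<and>
        \<bar>matdot (u \<epsilon>) (matdot (u \<epsilon>) (tau \<epsilon>)) t x\<bar> \<le> B"
  shows "\<exists>C. \<forall>\<^sub>F \<epsilon> in at_right 0. \<forall>t x.
        \<bar>avg l (\<lambda>y. Mfun l (b \<epsilon>) (tau \<epsilon>) (u \<epsilon>) t x y * dsigma l (b \<epsilon>) y)
          - (- EL l (b \<epsilon>) (tau \<epsilon>) (u \<epsilon>) t x)\<bar> \<le> C * \<epsilon> powr \<gamma>"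
proof -
  obtain B1 where B1: "\<forall>\<^sub>F \<epsilon> in at_right 0. \<forall>y\<in>{0..l}. \<bar>b \<epsilon> y\<bar> \<le> B1" using b_bounded by blast
  obtain C where C: "\<forall>\<^sub>F \<epsilon> in at_right 0. \<forall>t x. \<forall>y\<in>{0..l}.
        \<bar>tau \<epsilon> t x * dsigma l (b \<epsilon>) y\<bar> \<le> C * \<epsilon> powr \<gamma>" using wide by blast
  obtain K where K: "\<forall>\<^sub>F \<epsilon> in at_right 0. \<forall>t x.
        \<bar>matdot (u \<epsilon>) (tau \<epsilon>) t x\<bar> \<le> K \<and>
        \<bar>matdot (u \<epsilon>) (matdot (u \<epsilon>) (tau \<epsilon>)) t x\<bar> \<le> K" using dots_bounded by blast
  define Const where "Const = ((l * (8*B1*l*K + 80*B1*B1*l*K^2) + 80*B1^2*l^2*K^2) * (2*B1))"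
  have pos: "\<forall>\<^sub>F \<epsilon> in at_right 0. (\<epsilon>::real) > 0" by (simp add: eventually_at_right_less)
  have "\<forall>\<^sub>F \<epsilon> in at_right 0. \<forall>t x.
        \<bar>avg l (\<lambda>y. Mfun l (b \<epsilon>) (tau \<epsilon>) (u \<epsilon>) t x y * dsigma l (b \<epsilon>) y)
          - (- EL l (b \<epsilon>) (tau \<epsilon>) (u \<epsilon>) t x)\<bar> \<le> (Const * C) * \<epsilon> powr \<gamma>"
    using B1 C K pos powr_small[OF gamma_pos, of C]
  proof eventually_elim
    case (elim \<epsilon>)
    show ?case
    proof (intro allI)
      fix t x
      have bc: "continuous_on {0..l} (b \<epsilon>)" using b_cont elim by auto
      have sm: "(\<lambda>s. matdot (u \<epsilon>) (tau \<epsilon>) s x) differentiable at t"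
          "(\<lambda>z. matdot (u \<epsilon>) (tau \<epsilon>) t z) differentiable at x"
        using smooth elim by auto
      have ap: "\<bar>avg l (\<lambda>y. (integral {0..y} (\<lambda>s. sigma l (b \<epsilon>) s * matdot (u \<epsilon>) (matdot (u \<epsilon>) (tau \<epsilon>)) t x / (1 - tau \<epsilon> t x * dsigma l (b \<epsilon>) s)
            + sigma l (b \<epsilon>) s * dsigma l (b \<epsilon>) s * (matdot (u \<epsilon>) (tau \<epsilon>) t x)^2 / (1 - tau \<epsilon> t x * dsigma l (b \<epsilon>) s)^2)
            + (sigma l (b \<epsilon>) y)^2 * (matdot (u \<epsilon>) (tau \<epsilon>) t x)^2 / (2 * (1 - tau \<epsilon> t x * dsigma l (b \<epsilon>) y)^2)) * dsigma l (b \<epsilon>) y)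
         - (- (chi l (b \<epsilon>) * matdot (u \<epsilon>) (matdot (u \<epsilon>) (tau \<epsilon>)) t x))\<bar>
         \<le> Const * (C * \<epsilon> powr \<gamma>)"
        unfolding Const_def
        by (rule approx[OF l_pos bc]) (use elim in auto)
      show "\<bar>avg l (\<lambda>y. Mfun l (b \<epsilon>) (tau \<epsilon>) (u \<epsilon>) t x y * dsigma l (b \<epsilon>) y)
          - (- EL l (b \<epsilon>) (tau \<epsilon>) (u \<epsilon>) t x)\<bar> \<le> (Const * C) * \<epsilon> powr \<gamma>"
        using ap unfolding EL_eq[OF sm] Mfun_def by (simp add: mult.assoc)
    qed
  qed
  then show ?thesis by blast
qed

end
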